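(* Let $M$ be a finite abelian group and $i\colon\hat{M}\to\hat{M}$ a bijection with $i(x)=x\,i(x^{-1})$ for all $x\in\hat{M}$. Define $x\oplus y=x\,i(x/y)^{-1}$ for $x,y\in\hat{M}$. Then: (a) $\oplus$ is commutative; (b) $z(x\oplus y)=(zx)\oplus(zy)$ for all $x,y,z\in\hat{M}$; (c) $\oplus$ is cancellative, i.e., $x\oplus y=x\oplus z$ implies $y=z$.
   Context: $\hat{M}$ is the Pontryagin dual of $M$, written multiplicatively. *)

theory Defs
  imports "HOL-Algebra.Algebra" Complex_Main
begin

definition characters :: "('a, 'b) monoid_scheme \<Rightarrow> ('a \<Rightarrow> complex) set" where
  "characters M = {\<chi>. \<chi> \<in> extensional (carrier M)
      \<and> (\<forall>x\<in>carrier M. cmod (\<chi> x) = 1)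
      \<and> (\<forall>x\<in>carrier M. \<forall>y\<in>carrier M. \<chi> (x \<otimes>\<^bsub>M\<^esub> y) = \<chi> x * \<chi> y)}"

definition dual_group :: "('a, 'b) monoid_scheme \<Rightarrow> ('a \<Rightarrow> complex) monoid" where
  "dual_group M = \<lparr> carrier = characters M,
      monoid.mult = (\<lambda>\<chi> \<psi>. \<lambda>x\<in>carrier M. \<chi> x * \<psi> x),
      one = (\<lambda>x\<in>carrier M. 1) \<rparr>"

end

theory Submission
  imports Defs
begin

lemma dual_comm_group:
  assumes "comm_group M"
  shows "comm_group (dual_group M)"
proof -
  interpret M: comm_group M by fact
  show ?thesis
  proof (rule comm_groupI)
    fix x y assume "x \<in> carrier (dual_group M)" "y \<in> carrier (dual_group M)"
    then show "x \<otimes>\<^bsub>dual_group M\<^esub> y \<in> carrier (dual_group M)"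
      by (auto simp: dual_group_def characters_def norm_mult)
  next
    show "\<one>\<^bsub>dual_group M\<^esub> \<in> carrier (dual_group M)"
      by (auto simp: dual_group_def characters_def)
  next
    fix x y z assume "x \<in> carrier (dual_group M)" "y \<in> carrier (dual_group M)" "z \<in> carrier (dual_group M)"
    then show "x \<otimes>\<^bsub>dual_group M\<^esub> y \<otimes>\<^bsub>dual_group M\<^esub> z =
          x \<otimes>\<^bsub>dual_group M\<^esub> (y \<otimes>\<^bsub>dual_group M\<^esub> z)"
      by (auto simp: dual_group_def characters_def fun_eq_iff)
  next
    fix x y assume "x \<in> carrier (dual_group M)" "y \<in> carrier (dual_group M)"
    then show "x \<otimes>\<^bsub>dual_group M\<^esub> y = y \<otimes>\<^bsub>dual_group M\<^esub> x"
      by (auto simp: dual_group_def characters_def fun_eq_iff)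
  next
    fix x assume "x \<in> carrier (dual_group M)"
    then show "\<one>\<^bsub>dual_group M\<^esub> \<otimes>\<^bsub>dual_group M\<^esub> x = x"
      by (auto simp: dual_group_def characters_def fun_eq_iff extensional_def)
  next
    fix x assume x: "x \<in> carrier (dual_group M)"
    define y where "y = (\<lambda>a\<in>carrier M. inverse (x a))"
    have "y \<in> carrier (dual_group M)"
      using x by (auto simp: y_def dual_group_def characters_def norm_inverse)
    moreover have "y \<otimes>\<^bsub>dual_group M\<^esub> x = \<one>\<^bsub>dual_group M\<^esub>"
    proof -
      have "\<And>a. a \<in> carrier M \<Longrightarrow> x a \<noteq> 0"
        using x by (auto simp: dual_group_def characters_def)
      then show ?thesis by (auto simp: y_def dual_group_def fun_eq_iff)
    qed
    ultimately show "\<exists>y\<in>carrier (dual_group M). y \<otimes>\<^bsub>dual_group M\<^esub> x = \<one>\<^bsub>dual_group M\<^esub>" by blast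
  qed
qed

lemma abstract_part:
  fixes G (structure)
  assumes G: "comm_group G"
    and bij: "bij_betw i (carrier G) (carrier G)"
    and ix: "\<forall>x\<in>carrier G. i x = x \<otimes> i (inv x)"
    and op: "\<forall>x y. oplus x y = x \<otimes> inv (i (x \<otimes> inv y))"
  shows "(\<forall>x\<in>carrier G. \<forall>y\<in>carrier G. oplus x y = oplus y x)
    \<and> (\<forall>x\<in>carrier G. \<forall>y\<in>carrier G. \<forall>z\<in>carrier G.
         z \<otimes> oplus x y = oplus (z \<otimes> x) (z \<otimes> y))
    \<and> (\<forall>x\<in>carrier G. \<forall>y\<in>carrier G. \<forall>z\<in>carrier G.
         oplus x y = oplus x z \<longrightarrow> y = z)"
proof -
  interpret comm_group G by fact
  have ic: "\<And>x. x \<in> carrier G \<Longrightarrow> i x \<in> carrier G" using bij by (auto simp: bij_betw_def)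
  have inj: "inj_on i (carrier G)" using bij by (auto simp: bij_betw_def)
  have a: "oplus x y = oplus y x" if x: "x \<in> carrier G" and y: "y \<in> carrier G" for x y
  proof -
    let ?u = "x \<otimes> inv y"
    have u: "?u \<in> carrier G" using x y by simp
    have iu: "inv ?u = y \<otimes> inv x" using x y by (simp add: inv_mult m_comm)
    have "i ?u = ?u \<otimes> i (y \<otimes> inv x)" using ix u iu by simp
    hence "inv (i ?u) = inv ?u \<otimes> inv (i (y \<otimes> inv x))"
      using x y ic by (simp add: inv_mult m_comm)
    hence "x \<otimes> inv (i ?u) = x \<otimes> (y \<otimes> inv x) \<otimes> inv (i (y \<otimes> inv x))"
      using x y ic iu by (simp add: m_assoc)
    also have "x \<otimes> (y \<otimes> inv x) = y" using x y
      by (metis inv_closed m_assoc m_comm r_inv r_one)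
    finally show ?thesis using op by simp
  qed
  have b: "z \<otimes> oplus x y = oplus (z \<otimes> x) (z \<otimes> y)"
    if x: "x \<in> carrier G" and y: "y \<in> carrier G" and z: "z \<in> carrier G" for x y z
  proof -
    have "(z \<otimes> x) \<otimes> inv (z \<otimes> y) = x \<otimes> inv y" using x y z
    proof -
      have "(z \<otimes> x) \<otimes> inv (z \<otimes> y) = (z \<otimes> x) \<otimes> (inv z \<otimes> inv y)"
        using x y z by (simp add: inv_mult)
      also have "\<dots> = (inv z \<otimes> z) \<otimes> (x \<otimes> inv y)"
        using x y z by (simp add: m_ac)
      also have "\<dots> = x \<otimes> inv y" using x y z by simp
      finally show ?thesis .
    qed
    hence "oplus (z \<otimes> x) (z \<otimes> y) = (z \<otimes> x) \<otimes> inv (i (x \<otimes> inv y))" using op by simp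
    also have "\<dots> = z \<otimes> (x \<otimes> inv (i (x \<otimes> inv y)))" using x y z ic by (simp add: m_assoc)
    also have "\<dots> = z \<otimes> oplus x y" using op by simp
    finally show ?thesis by simp
  qed
  have c: "y = z" if x: "x \<in> carrier G" and y: "y \<in> carrier G" and z: "z \<in> carrier G"
    and e: "oplus x y = oplus x z" for x y z
  proof -
    have "inv (i (x \<otimes> inv y)) = inv (i (x \<otimes> inv z))" using e op x y z ic by simp
    hence "i (x \<otimes> inv y) = i (x \<otimes> inv z)" using x y z ic by (metis inv_inv m_closed inv_closed)
    hence "x \<otimes> inv y = x \<otimes> inv z" using inj x y z by (simp add: inj_on_def)
    hence "inv y = inv z" using x y z by simp
    thus ?thesis using y z by (metis inv_inv)
  qed
  show ?thesis using a b c by blast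
qed

theorem mainTheorem14:
  fixes M :: "('a, 'b) monoid_scheme"
    and i :: "('a \<Rightarrow> complex) \<Rightarrow> ('a \<Rightarrow> complex)"
    and oplus :: "('a \<Rightarrow> complex) \<Rightarrow> ('a \<Rightarrow> complex) \<Rightarrow> ('a \<Rightarrow> complex)"
  assumes "comm_group M"
    and "finite (carrier M)"
    and "bij_betw i (carrier (dual_group M)) (carrier (dual_group M))"
    and "\<forall>x\<in>carrier (dual_group M).
           i x = x \<otimes>\<^bsub>dual_group M\<^esub> i (inv\<^bsub>dual_group M\<^esub> x)"
    and "\<forall>x y. oplus x y = x \<otimes>\<^bsub>dual_group M\<^esub>
           inv\<^bsub>dual_group M\<^esub> (i (x \<otimes>\<^bsub>dual_group M\<^esub> inv\<^bsub>dual_group M\<^esub> y))"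
  shows "(\<forall>x\<in>carrier (dual_group M). \<forall>y\<in>carrier (dual_group M). oplus x y = oplus y x)
    \<and> (\<forall>x\<in>carrier (dual_group M). \<forall>y\<in>carrier (dual_group M). \<forall>z\<in>carrier (dual_group M).
         z \<otimes>\<^bsub>dual_group M\<^esub> oplus x y
           = oplus (z \<otimes>\<^bsub>dual_group M\<^esub> x) (z \<otimes>\<^bsub>dual_group M\<^esub> y))
    \<and> (\<forall>x\<in>carrier (dual_group M). \<forall>y\<in>carrier (dual_group M). \<forall>z\<in>carrier (dual_group M).
         oplus x y = oplus x z \<longrightarrow> y = z)"
  by (rule abstract_part[OF dual_comm_group[OF assms(1)] assms(3,4,5)])

end
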